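(* Let $X=(x_1,\dots,x_n)\in(\mathbb{Z}_{12})^n$ have $n$ pairwise distinct entries. Let $G$ be a subgroup of the group $\mathrm{Aff}^*(\mathbb{Z}_{12})$ of invertible affine maps $\mathbb{Z}_{12}\to\mathbb{Z}_{12}$, acting componentwise on $(\mathbb{Z}_{12})^n$, and assume $f\{x_1,\dots,x_n\}\neq\{x_1,\dots,x_n\}$ for every non-identity $f\in G$. Let $\Sigma_n$ act on $(\mathbb{Z}_{12})^n$ by $\sigma(y_1,\dots,y_n)=(y_{\sigma^{-1}(1)},\dots,y_{\sigma^{-1}(n)})$. Let $\Sigma_nG$ be the subgroup of $\mathrm{Sym}((\mathbb{Z}_{12})^n)$ generated by $\Sigma_n$ and $G$ (an internal direct product, each element written uniquely as $\sigma g$ with $\sigma\in\Sigma_n$, $g\in G$), and let $\lambda(\Sigma_nG)$ be the subgroup of $\mathrm{Sym}(\Sigma_nGX)$ given by the action of $\Sigma_nG$ on the orbit $\Sigma_nGX$. Let $\rho(\Sigma_nG)\subseteq\mathrm{Sym}(\Sigma_nGX)$ consist of the maps $\rho(\nu h)$, $\nu\in\Sigma_n$, $h\in G$, defined by $$\rho(\nu h)\,\sigma g X:=\sigma g(\nu h)^{-1}X\quad(\sigma\in\Sigma_n,\ g\in G),$$ and let $\rho(\Sigma_n)=\{\rho(\nu):\nu\in\Sigma_n\}$, $\rho(G)=\{\rho(h):h\in G\}$, with $\lambda(\Sigma_n)$, $\lambda(G)$ defined analogously from the left actions. Then: (i) the restriction of $\rho(\Sigma_n)$ to $\Sigma_nX$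 is the dual group of $\lambda(\Sigma_n)$ in $\mathrm{Sym}(\Sigma_nX)$, and the restriction of $\rho(G)$ to $GX$ is the dual group of $\lambda(G)$ in $\mathrm{Sym}(GX)$; (ii) the subgroups $\rho(\Sigma_n)$ and $\rho(G)$ of $\mathrm{Sym}(\Sigma_nGX)$ commute, i.e. $\rho(\nu)\rho(h)=\rho(h)\rho(\nu)$ for all $\nu\in\Sigma_n$, $h\in G$; (iii) $\rho(\Sigma_nG)$ is the internal direct product of $\rho(\Sigma_n)$ and $\rho(G)$; (iv) if $Y\in\sigma GX$ (for some $\sigma\in\Sigma_n$) and $h\in G$, then $\rho(h)Y=\sigma\rho(h)\sigma^{-1}Y$.
   Context: $\mathrm{Sym}(S)$ denotes the group of all bijections of a set $S$. An invertible affine map of $\mathbb{Z}_{12}$ is $k\mapsto ak+b$ with $a$ a unit of $\mathbb{Z}_{12}$; it acts on $n$-tuples componentwise, and these maps commute with the permutation action of $\Sigma_n$. The dual group of a subgroup $A\le\mathrm{Sym}(S)$ acting simply transitively is the subgroup $B$ such that $A,B$ both act simply transitively and each is the centralizer of the other in $\mathrm{Sym}(S)$. A group $H$ is the internal direct product of subgroups $K,L$ if $K$ and $L$ commute, $K\cap L=\{e\}$, and every element of $H$ is $k\ell$ with $k\in K$, $\ell\in L$. *)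

theory Defs
  imports "HOL-Library.Numeral_Type" "HOL-Combinatorics.Permutations"
begin

text \<open>Z_12 is the ring type 12 from Numeral_Type. n-tuples are lists of length n,
  indexed by 0..n-1; Sigma_n is the set of permutations of {0..<n}.\<close>

type_synonym z12 = "12"

definition Aff_star :: "(z12 \<Rightarrow> z12) set" where
  "Aff_star = {(\<lambda>k. a * k + b) | a b :: z12. a dvd 1}"

definition Sn :: "nat \<Rightarrow> (nat \<Rightarrow> nat) set" where
  "Sn n = {\<sigma>. \<sigma> permutes {..<n}}"

definition perm_act :: "(nat \<Rightarrow> nat) \<Rightarrow> 'a list \<Rightarrow> 'a list" where
  "perm_act \<sigma> y = map (\<lambda>i. y ! inv \<sigma> i) [0..<length y]"

definition sg :: "(nat \<Rightarrow> nat) \<Rightarrow> ('a \<Rightarrow> 'a) \<Rightarrow> 'a list \<Rightarrow> 'a list" where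
  "sg \<sigma> g y = perm_act \<sigma> (map g y)"

definition orbit :: "(nat \<Rightarrow> nat) set \<Rightarrow> ('a \<Rightarrow> 'a) set \<Rightarrow> 'a list \<Rightarrow> 'a list set" where
  "orbit P H X = {sg \<sigma> g X | \<sigma> g. \<sigma> \<in> P \<and> g \<in> H}"

definition Sym :: "'a set \<Rightarrow> ('a \<Rightarrow> 'a) set" where
  "Sym S = {f. bij_betw f S S \<and> (\<forall>x. x \<notin> S \<longrightarrow> f x = x)}"

definition ext_on :: "'a set \<Rightarrow> ('a \<Rightarrow> 'a) \<Rightarrow> 'a \<Rightarrow> 'a" where
  "ext_on S f = (\<lambda>x. if x \<in> S then f x else x)"

definition simply_transitive :: "('a \<Rightarrow> 'a) set \<Rightarrow> 'a set \<Rightarrow> bool" where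
  "simply_transitive A S \<longleftrightarrow> (\<forall>x\<in>S. \<forall>y\<in>S. \<exists>!f. f \<in> A \<and> f x = y)"

definition centralizer_in :: "'a set \<Rightarrow> ('a \<Rightarrow> 'a) set \<Rightarrow> ('a \<Rightarrow> 'a) set" where
  "centralizer_in S A = {f \<in> Sym S. \<forall>a\<in>A. f \<circ> a = a \<circ> f}"

definition dual_group :: "'a set \<Rightarrow> ('a \<Rightarrow> 'a) set \<Rightarrow> ('a \<Rightarrow> 'a) set \<Rightarrow> bool" where
  "dual_group S A B \<longleftrightarrow> A \<subseteq> Sym S \<and> B \<subseteq> Sym S \<and>
     simply_transitive A S \<and> simply_transitive B S \<and>
     centralizer_in S A = B \<and> centralizer_in S B = A"

definition internal_direct_product :: "('a \<Rightarrow> 'a) set \<Rightarrow> ('a \<Rightarrow> 'a) set \<Rightarrow> ('a \<Rightarrow> 'a) set \<Rightarrow> bool" where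
  "internal_direct_product H K L \<longleftrightarrow>
     (\<forall>k\<in>K. \<forall>l\<in>L. k \<circ> l = l \<circ> k) \<and> K \<inter> L = {id} \<and>
     H = {k \<circ> l | k l. k \<in> K \<and> l \<in> L}"

text \<open>rho(nu h) (sigma g X) := sigma g (nu h)^{-1} X, on the orbit Sigma_n G X;
  (nu h)^{-1} = nu^{-1} h^{-1} is written explicitly.\<close>
definition rho :: "nat \<Rightarrow> (z12 \<Rightarrow> z12) set \<Rightarrow> z12 list \<Rightarrow> (nat \<Rightarrow> nat) \<Rightarrow> (z12 \<Rightarrow> z12)
    \<Rightarrow> z12 list \<Rightarrow> z12 list" where
  "rho n G X \<nu> h = ext_on (orbit (Sn n) G X)
     (\<lambda>Y. THE Z. \<exists>\<sigma>\<in>Sn n. \<exists>g\<in>G. Y = sg \<sigma> g X \<and> Z = sg \<sigma> g (sg (inv \<nu>) (inv h) X))"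

end

theory Submission
  imports Defs
begin

section \<open>Abstract regular representation\<close>

locale reg =
  fixes P :: "('b \<Rightarrow> 'b) set" and \<phi> :: "('b \<Rightarrow> 'b) \<Rightarrow> 'a" and S :: "'a set"
    and a :: "('b \<Rightarrow> 'b) \<Rightarrow> 'a \<Rightarrow> 'a" and b :: "('b \<Rightarrow> 'b) \<Rightarrow> 'a \<Rightarrow> 'a"
  assumes P_id: "id \<in> P"
    and P_comp: "\<And>p q. p \<in> P \<Longrightarrow> q \<in> P \<Longrightarrow> p \<circ> q \<in> P"
    and P_inv: "\<And>p. p \<in> P \<Longrightarrow> inv p \<in> P"
    and P_bij: "\<And>p. p \<in> P \<Longrightarrow> bij p"
    and phi_inj: "inj_on \<phi> P"
    and S_eq: "S = \<phi> ` P"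
    and a_phi: "\<And>p q. p \<in> P \<Longrightarrow> q \<in> P \<Longrightarrow> a p (\<phi> q) = \<phi> (p \<circ> q)"
    and a_out: "\<And>p x. x \<notin> S \<Longrightarrow> a p x = x"
    and b_phi: "\<And>p q. p \<in> P \<Longrightarrow> q \<in> P \<Longrightarrow> b p (\<phi> q) = \<phi> (q \<circ> inv p)"
    and b_out: "\<And>p x. x \<notin> S \<Longrightarrow> b p x = x"
begin

lemma pinv1: "p \<in> P \<Longrightarrow> p \<circ> inv p = id"
  using surj_iff[THEN iffD1, OF bij_is_surj[OF P_bij]] .

lemma pinv2: "p \<in> P \<Longrightarrow> inv p \<circ> p = id"
  using inj_iff[THEN iffD1, OF bij_is_inj[OF P_bij]] .

lemma pinvinv: "p \<in> P \<Longrightarrow> inv (inv p) = p"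
  using inv_inv_eq[OF P_bij] .

lemma pinv1r: "p \<in> P \<Longrightarrow> q \<circ> p \<circ> inv p = q"
  by (simp add: comp_assoc pinv1)

lemma pinv2r: "p \<in> P \<Longrightarrow> q \<circ> inv p \<circ> p = q"
  by (simp add: comp_assoc pinv2)

lemma pinv1l: "p \<in> P \<Longrightarrow> p \<circ> inv p \<circ> q = q"
  by (simp add: pinv1)

lemma pinv2l: "p \<in> P \<Longrightarrow> inv p \<circ> p \<circ> q = q"
  by (simp add: pinv2)

lemmas pc = pinv1 pinv2 pinv1r pinv2r pinv1l pinv2l pinvinv

lemma phi_eq: "p \<in> P \<Longrightarrow> q \<in> P \<Longrightarrow> \<phi> p = \<phi> q \<Longrightarrow> p = q"
  using phi_inj by (meson inj_onD)

lemma phiS: "p \<in> P \<Longrightarrow> \<phi> p \<in> S"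
  using S_eq by blast

lemma a_Sym: assumes p: "p \<in> P" shows "a p \<in> Sym S"
proof -
  have "bij_betw (a p) S S"
  proof (rule bij_betw_byWitness[where f'="a (inv p)"])
    show "\<forall>x\<in>S. a (inv p) (a p x) = x"
      using p by (auto simp: S_eq a_phi P_comp P_inv o_assoc pc)
    show "\<forall>x\<in>S. a p (a (inv p) x) = x"
      using p by (auto simp: S_eq a_phi P_comp P_inv o_assoc pc)
    show "a p ` S \<subseteq> S" using p by (auto simp: S_eq a_phi P_comp)
    show "a (inv p) ` S \<subseteq> S" using p by (auto simp: S_eq a_phi P_comp P_inv)
  qed
  then show ?thesis by (simp add: Sym_def a_out)
qed

lemma b_Sym: assumes p: "p \<in> P" shows "b p \<in> Sym S"
proof -
  have "bij_betw (b p) S S"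
  proof (rule bij_betw_byWitness[where f'="b (inv p)"])
    show "\<forall>x\<in>S. b (inv p) (b p x) = x"
      using p by (auto simp: S_eq b_phi P_comp P_inv o_assoc pc)
    show "\<forall>x\<in>S. b p (b (inv p) x) = x"
      using p by (auto simp: S_eq b_phi P_comp P_inv o_assoc pc)
    show "b p ` S \<subseteq> S" using p by (auto simp: S_eq b_phi P_comp P_inv)
    show "b (inv p) ` S \<subseteq> S" using p by (auto simp: S_eq b_phi P_comp P_inv)
  qed
  then show ?thesis by (simp add: Sym_def b_out)
qed

lemma ab_comm: assumes p: "p \<in> P" and r: "r \<in> P" shows "b p \<circ> a r = a r \<circ> b p"
proof
  fix x show "(b p \<circ> a r) x = (a r \<circ> b p) x"
  proof (cases "x \<in> S")
    case True
    then obtain q where q: "q \<in> P" "x = \<phi> q" using S_eq by blast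
    show ?thesis using p r q by (simp add: a_phi b_phi P_comp P_inv o_assoc)
  next
    case False
    then show ?thesis by (simp add: a_out b_out)
  qed
qed

lemma cent_intro: "f \<in> Sym S \<Longrightarrow> (\<And>r. r \<in> P \<Longrightarrow> f \<circ> c r = c r \<circ> f)
   \<Longrightarrow> f \<in> centralizer_in S {c r | r. r \<in> P}"
  by (auto simp: centralizer_in_def)

lemma dual: "dual_group S {a p | p. p \<in> P} {b p | p. p \<in> P}"
  unfolding dual_group_def
proof (intro conjI)
  show "{a p |p. p \<in> P} \<subseteq> Sym S" using a_Sym by blast
  show "{b p |p. p \<in> P} \<subseteq> Sym S" using b_Sym by blast
  show "simply_transitive {a p |p. p \<in> P} S"
    unfolding simply_transitive_def
  proof (intro ballI)
    fix x y assume "x \<in> S" "y \<in> S"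
    then obtain q r where q: "q \<in> P" "x = \<phi> q" and r: "r \<in> P" "y = \<phi> r" using S_eq by blast
    show "\<exists>!f. f \<in> {a p |p. p \<in> P} \<and> f x = y"
    proof (rule ex1I[where a="a (r \<circ> inv q)"])
      show "a (r \<circ> inv q) \<in> {a p |p. p \<in> P} \<and> a (r \<circ> inv q) x = y"
        using q r by (auto simp: a_phi P_comp P_inv o_assoc pc)
      fix f assume f: "f \<in> {a p |p. p \<in> P} \<and> f x = y"
      then obtain p where p: "p \<in> P" "f = a p" by blast
      have "\<phi> (p \<circ> q) = \<phi> r"
        using f p q r a_phi[of p q] by simp
      then have "p \<circ> q = r"
        using p q r by (intro phi_eq) (auto simp: P_comp P_inv)
      then have "p \<circ> q \<circ> inv q = r \<circ> inv q" by simp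
      then have "p = r \<circ> inv q" using q by (simp only: pinv1r)
      then show "f = a (r \<circ> inv q)" using p by simp
    qed
  qed
  show "simply_transitive {b p |p. p \<in> P} S"
    unfolding simply_transitive_def
  proof (intro ballI)
    fix x y assume "x \<in> S" "y \<in> S"
    then obtain q r where q: "q \<in> P" "x = \<phi> q" and r: "r \<in> P" "y = \<phi> r" using S_eq by blast
    have e: "inv (inv r \<circ> q) = inv q \<circ> r"
      using q r by (simp add: o_inv_distrib P_bij P_inv pinvinv)
    show "\<exists>!f. f \<in> {b p |p. p \<in> P} \<and> f x = y"
    proof (rule ex1I[where a="b (inv r \<circ> q)"])
      show "b (inv r \<circ> q) \<in> {b p |p. p \<in> P} \<and> b (inv r \<circ> q) x = y"
        using q r e by (auto simp: b_phi P_comp P_inv o_assoc pc)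
      fix f assume f: "f \<in> {b p |p. p \<in> P} \<and> f x = y"
      then obtain p where p: "p \<in> P" "f = b p" by blast
      have "\<phi> (q \<circ> inv p) = \<phi> r"
        using f p q r b_phi[of p q] by simp
      then have "q \<circ> inv p = r"
        using p q r by (intro phi_eq) (auto simp: P_comp P_inv)
      then have "inv q \<circ> (q \<circ> inv p) = inv q \<circ> r" by simp
      then have "inv p = inv q \<circ> r" using q by (simp add: o_assoc pc)
      then have "inv (inv p) = inv (inv q \<circ> r)" by simp
      then have "p = inv r \<circ> q" using p q r by (simp add: o_inv_distrib P_bij P_inv pinvinv)
      then show "f = b (inv r \<circ> q)" using p by simp
    qed
  qed
  show "centralizer_in S {a p |p. p \<in> P} = {b p |p. p \<in> P}"
  proof
    show "{b p |p. p \<in> P} \<subseteq> centralizer_in S {a p |p. p \<in> P}"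
    proof
      fix f assume "f \<in> {b p |p. p \<in> P}"
      then obtain p where p: "p \<in> P" "f = b p" by blast
      show "f \<in> centralizer_in S {a p |p. p \<in> P}"
        using p b_Sym[OF p(1)] ab_comm[OF p(1)] by (intro cent_intro) auto
    qed
  next
    show "centralizer_in S {a p |p. p \<in> P} \<subseteq> {b p |p. p \<in> P}"
    proof
      fix f assume f: "f \<in> centralizer_in S {a p |p. p \<in> P}"
      then have fS: "f \<in> Sym S" and fc: "\<And>r. r \<in> P \<Longrightarrow> f \<circ> a r = a r \<circ> f"
        unfolding centralizer_in_def by blast+
      have "f (\<phi> id) \<in> S" using fS phiS[OF P_id] unfolding Sym_def bij_betw_def by blast
      then obtain m where m: "m \<in> P" "f (\<phi> id) = \<phi> m" using S_eq by blast
      have "f = b (inv m)"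
      proof
        fix x show "f x = b (inv m) x"
        proof (cases "x \<in> S")
          case True
          then obtain q where q: "q \<in> P" "x = \<phi> q" using S_eq by blast
          have "f x = f (a q (\<phi> id))" using q P_id by (simp add: a_phi)
          also have "\<dots> = a q (f (\<phi> id))" using fun_cong[OF fc[OF q(1)], of "\<phi> id"] by simp
          also have "\<dots> = \<phi> (q \<circ> m)" using m q by (simp add: a_phi)
          also have "\<dots> = b (inv m) x" using m q by (simp add: b_phi P_inv pinvinv)
          finally show ?thesis .
        next
          case False
          then show ?thesis using fS b_out unfolding Sym_def by auto
        qed
      qed
      then show "f \<in> {b p |p. p \<in> P}" using m P_inv by blast
    qed
  qed
  show "centralizer_in S {b p |p. p \<in> P} = {a p |p. p \<in> P}"
  proof
    show "{a p |p. p \<in> P} \<subseteq> centralizer_in S {b p |p. p \<in> P}"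
    proof
      fix f assume "f \<in> {a p |p. p \<in> P}"
      then obtain p where p: "p \<in> P" "f = a p" by blast
      show "f \<in> centralizer_in S {b p |p. p \<in> P}"
        using p a_Sym[OF p(1)] ab_comm[OF _ p(1)] by (intro cent_intro) auto
    qed
  next
    show "centralizer_in S {b p |p. p \<in> P} \<subseteq> {a p |p. p \<in> P}"
    proof
      fix f assume f: "f \<in> centralizer_in S {b p |p. p \<in> P}"
      then have fS: "f \<in> Sym S" and fc: "\<And>r. r \<in> P \<Longrightarrow> f \<circ> b r = b r \<circ> f"
        unfolding centralizer_in_def by blast+
      have "f (\<phi> id) \<in> S" using fS phiS[OF P_id] unfolding Sym_def bij_betw_def by blast
      then obtain m where m: "m \<in> P" "f (\<phi> id) = \<phi> m" using S_eq by blast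
      have "f = a m"
      proof
        fix x show "f x = a m x"
        proof (cases "x \<in> S")
          case True
          then obtain q where q: "q \<in> P" "x = \<phi> q" using S_eq by blast
          have "f x = f (b (inv q) (\<phi> id))" using q P_id by (simp add: b_phi P_inv pinvinv)
          also have "\<dots> = b (inv q) (f (\<phi> id))" using fun_cong[OF fc[OF P_inv[OF q(1)]], of "\<phi> id"] by simp
          also have "\<dots> = \<phi> (m \<circ> q)" using m q by (simp add: b_phi P_inv pinvinv)
          also have "\<dots> = a m x" using m q by (simp add: a_phi)
          finally show ?thesis .
        next
          case False
          then show ?thesis using fS a_out unfolding Sym_def by auto
        qed
      qed
      then show "f \<in> {a p |p. p \<in> P}" using m by blast
    qed
  qed
qed

end

section \<open>Permutation action on lists\<close>

lemma perm_act_length[simp]: "length (perm_act \<sigma> y) = length y"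
  by (simp add: perm_act_def)

lemma perm_act_nth: "i < length y \<Longrightarrow> perm_act \<sigma> y ! i = y ! inv \<sigma> i"
  by (simp add: perm_act_def)

lemma perm_act_id[simp]: "perm_act id y = y"
  by (rule nth_equalityI) (simp_all add: perm_act_nth)

lemma perm_lt: "\<sigma> permutes {..<n} \<Longrightarrow> i < n \<Longrightarrow> inv \<sigma> i < n"
  using permutes_in_image[OF permutes_inv] by fastforce

lemma perm_act_comp:
  assumes s: "\<sigma> permutes {..<length y}" and t: "\<tau> permutes {..<length y}"
  shows "perm_act \<sigma> (perm_act \<tau> y) = perm_act (\<sigma> \<circ> \<tau>) y"
proof (rule nth_equalityI)
  show "length (perm_act \<sigma> (perm_act \<tau> y)) = length (perm_act (\<sigma> \<circ> \<tau>) y)" by simp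
  fix i assume i: "i < length (perm_act \<sigma> (perm_act \<tau> y))"
  then have i': "i < length y" by simp
  have "inv (\<sigma> \<circ> \<tau>) = inv \<tau> \<circ> inv \<sigma>"
    using o_inv_distrib[OF permutes_bij[OF s] permutes_bij[OF t]] .
  then show "perm_act \<sigma> (perm_act \<tau> y) ! i = perm_act (\<sigma> \<circ> \<tau>) y ! i"
    using i' perm_lt[OF s i'] by (simp add: perm_act_nth)
qed

lemma perm_act_map:
  assumes s: "\<sigma> permutes {..<length y}"
  shows "perm_act \<sigma> (map g y) = map g (perm_act \<sigma> y)"
proof (rule nth_equalityI)
  show "length (perm_act \<sigma> (map g y)) = length (map g (perm_act \<sigma> y))" by simp
  fix i assume i: "i < length (perm_act \<sigma> (map g y))"
  then have i': "i < length y" by simp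
  show "perm_act \<sigma> (map g y) ! i = map g (perm_act \<sigma> y) ! i"
    using i' perm_lt[OF s i'] by (simp add: perm_act_nth)
qed

lemma perm_act_set:
  assumes s: "\<sigma> permutes {..<length y}"
  shows "set (perm_act \<sigma> y) = set y"
proof -
  have "set (perm_act \<sigma> y) = (\<lambda>i. y ! i) ` (inv \<sigma> ` {..<length y})"
    by (auto simp: perm_act_def image_image atLeast0LessThan)
  also have "inv \<sigma> ` {..<length y} = {..<length y}"
    using permutes_image[OF permutes_inv[OF s]] .
  also have "(\<lambda>i. y ! i) ` {..<length y} = set y"
    by (auto simp: in_set_conv_nth)
  finally show ?thesis .
qed

lemma perm_act_inj:
  assumes d: "distinct y" and s: "\<sigma> permutes {..<length y}" and s': "\<sigma>' permutes {..<length y}"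
    and e: "perm_act \<sigma> y = perm_act \<sigma>' y"
  shows "\<sigma> = \<sigma>'"
proof -
  have "inv \<sigma> = inv \<sigma>'"
  proof
    fix i show "inv \<sigma> i = inv \<sigma>' i"
    proof (cases "i < length y")
      case True
      have "y ! inv \<sigma> i = y ! inv \<sigma>' i"
        using arg_cong[OF e, of "\<lambda>z. z ! i"] True by (simp add: perm_act_nth)
      then show ?thesis
        using d perm_lt[OF s True] perm_lt[OF s' True] nth_eq_iff_index_eq by blast
    next
      case False
      then show ?thesis
        using permutes_not_in[OF permutes_inv[OF s]] permutes_not_in[OF permutes_inv[OF s']] by simp
    qed
  qed
  then show ?thesis using permutes_inv_inv[OF s] permutes_inv_inv[OF s'] by metis
qed

lemma aff_bij: assumes "f \<in> Aff_star" shows "bij f"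
proof -
  obtain a b :: z12 where f: "f = (\<lambda>k. a * k + b)" and a: "a dvd 1"
    using assms unfolding Aff_star_def by blast
  obtain c where c: "1 = a * c" using a by (auto simp: dvd_def)
  show ?thesis
  proof (rule o_bij[where g="\<lambda>k. c * (k - b)"])
    show "(\<lambda>k. c * (k - b)) \<circ> f = id"
    proof
      fix k
      have "c * (a * k + b - b) = (a * c) * k" by (simp add: ac_simps)
      then show "((\<lambda>k. c * (k - b)) \<circ> f) k = id k" using c[symmetric] by (simp add: f)
    qed
    show "f \<circ> (\<lambda>k. c * (k - b)) = id"
    proof
      fix k
      have "a * (c * (k - b)) + b = (a * c) * (k - b) + b" by (simp add: ac_simps)
      then show "(f \<circ> (\<lambda>k. c * (k - b))) k = id k" using c[symmetric] by (simp add: f)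
    qed
  qed
qed

locale ctx =
  fixes n :: nat and X :: "z12 list" and G :: "(z12 \<Rightarrow> z12) set"
  assumes len: "length X = n"
    and dist: "distinct X"
    and G_aff: "G \<subseteq> Aff_star"
    and G_id: "id \<in> G"
    and G_comp: "\<forall>f\<in>G. \<forall>g\<in>G. f \<circ> g \<in> G"
    and G_inv: "\<forall>f\<in>G. inv f \<in> G"
    and free: "\<forall>f\<in>G. f \<noteq> id \<longrightarrow> f ` set X \<noteq> set X"
begin

lemma Gc: "f \<in> G \<Longrightarrow> g \<in> G \<Longrightarrow> f \<circ> g \<in> G" using G_comp by blast
lemma Gi: "f \<in> G \<Longrightarrow> inv f \<in> G" using G_inv by blast
lemma Gb: "f \<in> G \<Longrightarrow> bij f" using G_aff aff_bij by blast

lemma Snp: "\<sigma> \<in> Sn n \<longleftrightarrow> \<sigma> permutes {..<length X}"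
  by (simp add: Sn_def len)

lemma Sn_id: "id \<in> Sn n" by (simp add: Sn_def)
lemma Sn_c: "\<sigma> \<in> Sn n \<Longrightarrow> \<tau> \<in> Sn n \<Longrightarrow> \<sigma> \<circ> \<tau> \<in> Sn n"
  by (simp add: Sn_def permutes_compose)
lemma Sn_i: "\<sigma> \<in> Sn n \<Longrightarrow> inv \<sigma> \<in> Sn n"
  by (simp add: Sn_def permutes_inv)

lemma sg_comp:
  assumes "\<sigma> \<in> Sn n" "\<nu> \<in> Sn n"
  shows "sg \<sigma> g (sg \<nu> h X) = sg (\<sigma> \<circ> \<nu>) (g \<circ> h) X"
proof -
  have s: "\<sigma> permutes {..<length (map h X)}" and v: "\<nu> permutes {..<length (map h X)}"
    using assms by (simp_all add: Snp)
  have "sg \<sigma> g (sg \<nu> h X) = perm_act \<sigma> (map g (perm_act \<nu> (map h X)))"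
    by (simp add: sg_def)
  also have "\<dots> = perm_act \<sigma> (perm_act \<nu> (map g (map h X)))"
    by (simp only: perm_act_map[OF v])
  also have "\<dots> = perm_act (\<sigma> \<circ> \<nu>) (map (g \<circ> h) X)"
    using perm_act_comp[of \<sigma> "map g (map h X)" \<nu>] s v by simp
  finally show ?thesis by (simp add: sg_def)
qed

lemma sg_inj:
  assumes s: "\<sigma> \<in> Sn n" and s': "\<sigma>' \<in> Sn n" and g: "g \<in> G" and g': "g' \<in> G"
    and e: "sg \<sigma> g X = sg \<sigma>' g' X"
  shows "\<sigma> = \<sigma>' \<and> g = g'"
proof -
  have sp: "\<sigma> permutes {..<length (map g X)}" "\<sigma>' permutes {..<length (map g' X)}"
    using s s' by (simp_all add: Snp)
  have "set (sg \<sigma> g X) = g ` set X" using perm_act_set[OF sp(1)] by (simp add: sg_def)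
  moreover have "set (sg \<sigma>' g' X) = g' ` set X" using perm_act_set[OF sp(2)] by (simp add: sg_def)
  ultimately have im: "g ` set X = g' ` set X" using e by simp
  have bg': "bij g'" using Gb[OF g'] .
  have "(inv g' \<circ> g) ` set X = inv g' ` (g ` set X)" by (rule image_comp[symmetric])
  also have "\<dots> = inv g' ` (g' ` set X)" using im by simp
  also have "\<dots> = set X" using image_inv_f_f[OF bij_is_inj[OF bg']] .
  finally have "inv g' \<circ> g = id" using free Gc[OF Gi[OF g'] g] by blast
  then have "g' \<circ> (inv g' \<circ> g) = g'" by simp
  then have gg: "g = g'"
    using surj_iff[THEN iffD1, OF bij_is_surj[OF bg']] by (simp add: o_assoc)
  have d: "distinct (map g X)"
    using dist bij_is_inj[OF Gb[OF g]] by (simp add: distinct_map inj_on_def inj_def)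
  have "perm_act \<sigma> (map g X) = perm_act \<sigma>' (map g X)" using e gg by (simp add: sg_def)
  then have "\<sigma> = \<sigma>'" using perm_act_inj[OF d] sp gg by simp
  then show ?thesis using gg by simp
qed

lemma orbit_mem: "\<sigma> \<in> Sn n \<Longrightarrow> g \<in> G \<Longrightarrow> sg \<sigma> g X \<in> orbit (Sn n) G X"
  by (auto simp: orbit_def)

lemma rho_eq:
  assumes s: "\<sigma> \<in> Sn n" and v: "\<nu> \<in> Sn n" and g: "g \<in> G" and h: "h \<in> G"
  shows "rho n G X \<nu> h (sg \<sigma> g X) = sg (\<sigma> \<circ> inv \<nu>) (g \<circ> inv h) X"
proof -
  have "rho n G X \<nu> h (sg \<sigma> g X) = (THE Z. \<exists>\<sigma>'\<in>Sn n. \<exists>g'\<in>G. sg \<sigma> g X = sg \<sigma>' g' X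
          \<and> Z = sg \<sigma>' g' (sg (inv \<nu>) (inv h) X))"
    using orbit_mem[OF s g] by (simp add: rho_def ext_on_def)
  also have "\<dots> = sg \<sigma> g (sg (inv \<nu>) (inv h) X)"
  proof (rule the_equality)
    show "\<exists>\<sigma>'\<in>Sn n. \<exists>g'\<in>G. sg \<sigma> g X = sg \<sigma>' g' X
          \<and> sg \<sigma> g (sg (inv \<nu>) (inv h) X) = sg \<sigma>' g' (sg (inv \<nu>) (inv h) X)"
      using s g by blast
    fix Z assume "\<exists>\<sigma>'\<in>Sn n. \<exists>g'\<in>G. sg \<sigma> g X = sg \<sigma>' g' X
          \<and> Z = sg \<sigma>' g' (sg (inv \<nu>) (inv h) X)"
    then obtain \<sigma>' g' where "\<sigma>' \<in> Sn n" "g' \<in> G" "sg \<sigma> g X = sg \<sigma>' g' X"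
        "Z = sg \<sigma>' g' (sg (inv \<nu>) (inv h) X)" by blast
    then show "Z = sg \<sigma> g (sg (inv \<nu>) (inv h) X)" using sg_inj[OF s _ g] by metis
  qed
  also have "\<dots> = sg (\<sigma> \<circ> inv \<nu>) (g \<circ> inv h) X"
    using sg_comp[OF s Sn_i[OF v]] .
  finally show ?thesis .
qed

lemma rho_out: "Y \<notin> orbit (Sn n) G X \<Longrightarrow> rho n G X \<nu> h Y = Y"
  by (simp add: rho_def ext_on_def)

lemma orbitE:
  assumes "Y \<in> orbit P H X"
  obtains \<sigma> g where "\<sigma> \<in> P" "g \<in> H" "Y = sg \<sigma> g X"
  using assms unfolding orbit_def by blast

lemma rho_comp:
  assumes "\<nu> \<in> Sn n" "\<mu> \<in> Sn n" "h \<in> G" "k \<in> G"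
  shows "rho n G X \<nu> h \<circ> rho n G X \<mu> k = rho n G X (\<nu> \<circ> \<mu>) (h \<circ> k)"
proof
  fix Y show "(rho n G X \<nu> h \<circ> rho n G X \<mu> k) Y = rho n G X (\<nu> \<circ> \<mu>) (h \<circ> k) Y"
  proof (cases "Y \<in> orbit (Sn n) G X")
    case True
    then obtain \<sigma> g where sg: "\<sigma> \<in> Sn n" "g \<in> G" "Y = sg \<sigma> g X" by (rule orbitE)
    have "inv (\<nu> \<circ> \<mu>) = inv \<mu> \<circ> inv \<nu>"
      using assms by (simp add: o_inv_distrib permutes_bij Sn_def)
    moreover have "inv (h \<circ> k) = inv k \<circ> inv h"
      using assms by (simp add: o_inv_distrib Gb)
    ultimately have r: "rho n G X (\<nu> \<circ> \<mu>) (h \<circ> k) Y = sg (\<sigma> \<circ> inv \<mu> \<circ> inv \<nu>) (g \<circ> inv k \<circ> inv h) X"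
      using sg assms rho_eq[OF sg(1) Sn_c[OF assms(1,2)] sg(2) Gc[OF assms(3,4)]] by (simp add: o_assoc)
    have l1: "rho n G X \<mu> k Y = sg (\<sigma> \<circ> inv \<mu>) (g \<circ> inv k) X"
      using sg rho_eq[OF sg(1) assms(2) sg(2) assms(4)] by simp
    have l2: "rho n G X \<nu> h (sg (\<sigma> \<circ> inv \<mu>) (g \<circ> inv k) X) = sg (\<sigma> \<circ> inv \<mu> \<circ> inv \<nu>) (g \<circ> inv k \<circ> inv h) X"
      using rho_eq[OF Sn_c[OF sg(1) Sn_i[OF assms(2)]] assms(1) Gc[OF sg(2) Gi[OF assms(4)]] assms(3)] .
    show ?thesis using l1 l2 r by simp
  next
    case False
    then show ?thesis by (simp add: rho_out)
  qed
qed

lemma rho_id: "rho n G X id id = id"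
proof
  fix Y show "rho n G X id id Y = id Y"
  proof (cases "Y \<in> orbit (Sn n) G X")
    case True
    then obtain \<sigma> g where sg: "\<sigma> \<in> Sn n" "g \<in> G" "Y = sg \<sigma> g X" by (rule orbitE)
    then show ?thesis using rho_eq[OF sg(1) Sn_id sg(2) G_id] by simp
  next
    case False
    then show ?thesis by (simp add: rho_out)
  qed
qed

end

theorem theorem3p2:
  fixes n :: nat and X :: "z12 list" and G :: "(z12 \<Rightarrow> z12) set"
  assumes len: "length X = n"
    and dist: "distinct X"
    and G_aff: "G \<subseteq> Aff_star"
    and G_id: "id \<in> G"
    and G_comp: "\<forall>f\<in>G. \<forall>g\<in>G. f \<circ> g \<in> G"
    and G_inv: "\<forall>f\<in>G. inv f \<in> G"
    and free: "\<forall>f\<in>G. f \<noteq> id \<longrightarrow> f ` set X \<noteq> set X"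
  shows
    "dual_group (orbit (Sn n) {id} X)
        {ext_on (orbit (Sn n) {id} X) (sg \<nu> id) | \<nu>. \<nu> \<in> Sn n}
        {ext_on (orbit (Sn n) {id} X) (rho n G X \<nu> id) | \<nu>. \<nu> \<in> Sn n}
     \<and> dual_group (orbit {id} G X)
        {ext_on (orbit {id} G X) (sg id h) | h. h \<in> G}
        {ext_on (orbit {id} G X) (rho n G X id h) | h. h \<in> G}
     \<and> (\<forall>\<nu>\<in>Sn n. \<forall>h\<in>G. rho n G X \<nu> id \<circ> rho n G X id h = rho n G X id h \<circ> rho n G X \<nu> id)
     \<and> internal_direct_product
        {rho n G X \<nu> h | \<nu> h. \<nu> \<in> Sn n \<and> h \<in> G}
        {rho n G X \<nu> id | \<nu>. \<nu> \<in> Sn n}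
        {rho n G X id h | h. h \<in> G}
     \<and> (\<forall>\<sigma>\<in>Sn n. \<forall>h\<in>G. \<forall>Y\<in>orbit {\<sigma>} G X.
          rho n G X id h Y = sg \<sigma> id (rho n G X id h (sg (inv \<sigma>) id Y)))"
proof -
  interpret ctx n X G using assms by unfold_locales
  let ?S1 = "orbit (Sn n) {id} X"
  let ?S2 = "orbit {id} G X"
  have inS1: "\<And>q. q \<in> Sn n \<Longrightarrow> sg q id X \<in> ?S1" by (auto simp: orbit_def)
  have inS2: "\<And>q. q \<in> G \<Longrightarrow> sg id q X \<in> ?S2" by (auto simp: orbit_def)
  interpret r1: reg "Sn n" "\<lambda>\<sigma>. sg \<sigma> id X" ?S1 "\<lambda>\<nu>. ext_on ?S1 (sg \<nu> id)"
      "\<lambda>\<nu>. ext_on ?S1 (rho n G X \<nu> id)"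
  proof (unfold_locales)
    show "id \<in> Sn n" by (rule Sn_id)
    show "\<And>p q. p \<in> Sn n \<Longrightarrow> q \<in> Sn n \<Longrightarrow> p \<circ> q \<in> Sn n" by (rule Sn_c)
    show "\<And>p. p \<in> Sn n \<Longrightarrow> inv p \<in> Sn n" by (rule Sn_i)
    show "\<And>p. p \<in> Sn n \<Longrightarrow> bij p" by (simp add: Sn_def permutes_bij)
    show "inj_on (\<lambda>\<sigma>. sg \<sigma> id X) (Sn n)"
      by (rule inj_onI) (use sg_inj[OF _ _ G_id G_id] in blast)
    show "?S1 = (\<lambda>\<sigma>. sg \<sigma> id X) ` Sn n" by (auto simp: orbit_def)
    show "\<And>p q. p \<in> Sn n \<Longrightarrow> q \<in> Sn n \<Longrightarrow> ext_on ?S1 (sg p id) (sg q id X) = sg (p \<circ> q) id X"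
      using inS1 sg_comp by (simp add: ext_on_def)
    show "\<And>p x. x \<notin> ?S1 \<Longrightarrow> ext_on ?S1 (sg p id) x = x" by (simp add: ext_on_def)
    show "\<And>p q. p \<in> Sn n \<Longrightarrow> q \<in> Sn n \<Longrightarrow> ext_on ?S1 (rho n G X p id) (sg q id X) = sg (q \<circ> inv p) id X"
      using inS1 rho_eq[OF _ _ G_id G_id] by (simp add: ext_on_def)
    show "\<And>p x. x \<notin> ?S1 \<Longrightarrow> ext_on ?S1 (rho n G X p id) x = x" by (simp add: ext_on_def)
  qed
  interpret r2: reg G "\<lambda>h. sg id h X" ?S2 "\<lambda>h. ext_on ?S2 (sg id h)"
      "\<lambda>h. ext_on ?S2 (rho n G X id h)"
  proof (unfold_locales)
    show "id \<in> G" by (rule G_id)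
    show "\<And>p q. p \<in> G \<Longrightarrow> q \<in> G \<Longrightarrow> p \<circ> q \<in> G" by (rule Gc)
    show "\<And>p. p \<in> G \<Longrightarrow> inv p \<in> G" by (rule Gi)
    show "\<And>p. p \<in> G \<Longrightarrow> bij p" by (rule Gb)
    show "inj_on (\<lambda>h. sg id h X) G"
      by (rule inj_onI) (use sg_inj[OF Sn_id Sn_id] in blast)
    show "?S2 = (\<lambda>h. sg id h X) ` G" by (auto simp: orbit_def)
    show "\<And>p q. p \<in> G \<Longrightarrow> q \<in> G \<Longrightarrow> ext_on ?S2 (sg id p) (sg id q X) = sg id (p \<circ> q) X"
      using inS2 sg_comp[OF Sn_id Sn_id] by (simp add: ext_on_def)
    show "\<And>p x. x \<notin> ?S2 \<Longrightarrow> ext_on ?S2 (sg id p) x = x" by (simp add: ext_on_def)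
    show "\<And>p q. p \<in> G \<Longrightarrow> q \<in> G \<Longrightarrow> ext_on ?S2 (rho n G X id p) (sg id q X) = sg id (q \<circ> inv p) X"
      using inS2 rho_eq[OF Sn_id Sn_id] by (simp add: ext_on_def)
    show "\<And>p x. x \<notin> ?S2 \<Longrightarrow> ext_on ?S2 (rho n G X id p) x = x" by (simp add: ext_on_def)
  qed
  have split: "\<And>\<nu> h. \<nu> \<in> Sn n \<Longrightarrow> h \<in> G \<Longrightarrow> rho n G X \<nu> id \<circ> rho n G X id h = rho n G X \<nu> h"
    using rho_comp[OF _ Sn_id G_id] by simp
  have split2: "\<And>\<nu> h. \<nu> \<in> Sn n \<Longrightarrow> h \<in> G \<Longrightarrow> rho n G X id h \<circ> rho n G X \<nu> id = rho n G X \<nu> h"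
    using rho_comp[OF Sn_id _ _ G_id] by simp
  have comm: "\<forall>\<nu>\<in>Sn n. \<forall>h\<in>G. rho n G X \<nu> id \<circ> rho n G X id h = rho n G X id h \<circ> rho n G X \<nu> id"
    using split split2 by simp
  have idp: "internal_direct_product
        {rho n G X \<nu> h | \<nu> h. \<nu> \<in> Sn n \<and> h \<in> G}
        {rho n G X \<nu> id | \<nu>. \<nu> \<in> Sn n}
        {rho n G X id h | h. h \<in> G}"
    unfolding internal_direct_product_def
  proof (intro conjI)
    show "\<forall>k\<in>{rho n G X \<nu> id | \<nu>. \<nu> \<in> Sn n}. \<forall>l\<in>{rho n G X id h | h. h \<in> G}. k \<circ> l = l \<circ> k"
      using comm by blast
    show "{rho n G X \<nu> id | \<nu>. \<nu> \<in> Sn n} \<inter> {rho n G X id h | h. h \<in> G} = {id}"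
    proof
      show "{id} \<subseteq> {rho n G X \<nu> id | \<nu>. \<nu> \<in> Sn n} \<inter> {rho n G X id h | h. h \<in> G}"
        using rho_id Sn_id G_id by force
      show "{rho n G X \<nu> id | \<nu>. \<nu> \<in> Sn n} \<inter> {rho n G X id h | h. h \<in> G} \<subseteq> {id}"
      proof
        fix f assume "f \<in> {rho n G X \<nu> id | \<nu>. \<nu> \<in> Sn n} \<inter> {rho n G X id h | h. h \<in> G}"
        then obtain \<nu> h where v: "\<nu> \<in> Sn n" and h: "h \<in> G" and f1: "f = rho n G X \<nu> id"
          and f2: "f = rho n G X id h" by blast
        have "rho n G X \<nu> id (sg id id X) = rho n G X id h (sg id id X)" using f1 f2 by simp
        then have "sg (inv \<nu>) id X = sg id (inv h) X"
          using rho_eq[OF Sn_id v G_id G_id] rho_eq[OF Sn_id Sn_id G_id h] by simp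
        then have "inv \<nu> = id \<and> inv h = id" using sg_inj[OF Sn_i[OF v] Sn_id G_id Gi[OF h]] by simp
        then have "\<nu> = id" "h = id"
          using permutes_inv_inv[of \<nu> "{..<n}"] v inv_inv_eq[OF Gb[OF h]] by (auto simp: Sn_def)
        then show "f \<in> {id}" using f1 rho_id by simp
      qed
    qed
    show "{rho n G X \<nu> h | \<nu> h. \<nu> \<in> Sn n \<and> h \<in> G} =
        {k \<circ> l | k l. k \<in> {rho n G X \<nu> id | \<nu>. \<nu> \<in> Sn n} \<and> l \<in> {rho n G X id h | h. h \<in> G}}"
    proof
      show "{rho n G X \<nu> h | \<nu> h. \<nu> \<in> Sn n \<and> h \<in> G} \<subseteq>
        {k \<circ> l | k l. k \<in> {rho n G X \<nu> id | \<nu>. \<nu> \<in> Sn n} \<and> l \<in> {rho n G X id h | h. h \<in> G}}"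
      proof
        fix f assume "f \<in> {rho n G X \<nu> h | \<nu> h. \<nu> \<in> Sn n \<and> h \<in> G}"
        then obtain \<nu> h where "\<nu> \<in> Sn n" "h \<in> G" "f = rho n G X \<nu> h" by blast
        then show "f \<in> {k \<circ> l | k l. k \<in> {rho n G X \<nu> id | \<nu>. \<nu> \<in> Sn n} \<and> l \<in> {rho n G X id h | h. h \<in> G}}"
          using split[symmetric] by blast
      qed
      show "{k \<circ> l | k l. k \<in> {rho n G X \<nu> id | \<nu>. \<nu> \<in> Sn n} \<and> l \<in> {rho n G X id h | h. h \<in> G}}
          \<subseteq> {rho n G X \<nu> h | \<nu> h. \<nu> \<in> Sn n \<and> h \<in> G}"
      proof
        fix f assume "f \<in> {k \<circ> l | k l. k \<in> {rho n G X \<nu> id | \<nu>. \<nu> \<in> Sn n} \<and> l \<in> {rho n G X id h | h. h \<in> G}}"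
        then obtain \<nu> h where "\<nu> \<in> Sn n" "h \<in> G" "f = rho n G X \<nu> id \<circ> rho n G X id h" by blast
        then show "f \<in> {rho n G X \<nu> h | \<nu> h. \<nu> \<in> Sn n \<and> h \<in> G}"
          using split by blast
      qed
    qed
  qed
  have iv: "\<forall>\<sigma>\<in>Sn n. \<forall>h\<in>G. \<forall>Y\<in>orbit {\<sigma>} G X.
          rho n G X id h Y = sg \<sigma> id (rho n G X id h (sg (inv \<sigma>) id Y))"
  proof (intro ballI)
    fix \<sigma> h Y assume s: "\<sigma> \<in> Sn n" and h: "h \<in> G" and Y: "Y \<in> orbit {\<sigma>} G X"
    then obtain g where g: "g \<in> G" and Yg: "Y = sg \<sigma> g X" by (auto elim: orbitE)
    have "sg (inv \<sigma>) id Y = sg (inv \<sigma> \<circ> \<sigma>) (id \<circ> g) X"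
      using Yg sg_comp[OF Sn_i[OF s] s] by simp
    also have "\<dots> = sg id g X" using s by (simp add: Sn_def permutes_inv_o)
    finally have e1: "sg (inv \<sigma>) id Y = sg id g X" .
    have e2: "rho n G X id h (sg id g X) = sg id (g \<circ> inv h) X"
      using rho_eq[OF Sn_id Sn_id g h] by simp
    have e3: "sg \<sigma> id (sg id (g \<circ> inv h) X) = sg \<sigma> (g \<circ> inv h) X"
      using sg_comp[OF s Sn_id] by simp
    have e4: "rho n G X id h Y = sg \<sigma> (g \<circ> inv h) X"
      using Yg rho_eq[OF s Sn_id g h] by simp
    show "rho n G X id h Y = sg \<sigma> id (rho n G X id h (sg (inv \<sigma>) id Y))"
      using e1 e2 e3 e4 by simp
  qed
  show ?thesis using r1.dual r2.dual comm idp iv by simp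
qed

end
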